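(* Let $m,n\geq2$, let $\mathbf p\in\mathbb R^m$, $\mathbf q\in\mathbb R^n$ be probability vectors with all entries strictly positive, and let $\Psi$ be strict Schur-concave on $\mathcal C(\mathbf p,\mathbf q)$. Let $P\in\mathcal C(\mathbf p,\mathbf q)$, and let $A=(a_{s,t})_{2\times2}$ with $a_{s,t}=p_{i_s,j_t}$ be a $2\times2$ submatrix of $P$ (distinct rows $i_1,i_2$, distinct columns $j_1,j_2$) with $\max(a_{1,1},a_{2,2})\geq\max(a_{1,2},a_{2,1})$. Let $b=\min(a_{1,2},a_{2,1})$, let $A'$ have entries $a'_{s,s}=a_{s,s}+b$ ($s=1,2$), $a'_{1,2}=a_{1,2}-b$, $a'_{2,1}=a_{2,1}-b$, and let $P'$ be obtained from $P$ by replacing $A$ with $A'$. Then $P'\in\mathcal C(\mathbf p,\mathbf q)$ and, as vectors in $\mathbb R^{mn}$, $P\preceq P'$, hence $\Psi(P')\leq\Psi(P)$. In particular, if $b>0$ then $P\prec P'$ and $\Psi(P')<\Psi(P)$.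
   Context: $\mathcal C(\mathbf p,\mathbf q)$: nonnegative $m\times n$ matrices with row sums $p_i$, column sums $q_j$, viewed as vectors in $\mathbb R^{mn}$. Majorization: for $x,y\in\mathbb R^N$ with decreasing rearrangements $\bar x,\bar y$ and $F_{\bar x}(i)=\sum_{k\le i}\bar x_k$, $x\preceq y$ if $F_{\bar x}(i)\le F_{\bar y}(i)$ for $1\le i<N$ and $F_{\bar x}(N)=F_{\bar y}(N)$; $x\prec y$ if moreover strict inequality holds for some $i<N$. $\Psi$ (symmetric) is strict Schur-concave if $x\preceq y$ implies $\Psi(x)\ge\Psi(y)$ and $x\prec y$ implies $\Psi(x)>\Psi(y)$. *)

theory Defs
  imports Complex_Main "HOL-Library.Multiset"
begin

text \<open>Vectors in R^N are represented as real lists of length N.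
  Decreasing rearrangement and partial sums F.\<close>

definition dec_rearr :: "real list \<Rightarrow> real list" where
  "dec_rearr x = rev (sort x)"

definition psum_dec :: "real list \<Rightarrow> nat \<Rightarrow> real" where
  "psum_dec x i = sum_list (take i (dec_rearr x))"

definition majorized :: "real list \<Rightarrow> real list \<Rightarrow> bool" where
  "majorized x y \<longleftrightarrow> length x = length y \<and>
     (\<forall>i. 1 \<le> i \<and> i < length x \<longrightarrow> psum_dec x i \<le> psum_dec y i) \<and>
     psum_dec x (length x) = psum_dec y (length y)"

definition strictly_majorized :: "real list \<Rightarrow> real list \<Rightarrow> bool" where
  "strictly_majorized x y \<longleftrightarrow> majorized x y \<and>
     (\<exists>i. 1 \<le> i \<and> i < length x \<and> psum_dec x i < psum_dec y i)"

text \<open>Matrices are functions nat => nat => real, indexed by i < m, j < n (0-based).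
  Flattening into R^{mn} (row-major).\<close>

definition flatten :: "nat \<Rightarrow> nat \<Rightarrow> (nat \<Rightarrow> nat \<Rightarrow> real) \<Rightarrow> real list" where
  "flatten m n P = concat (map (\<lambda>i. map (\<lambda>j. P i j) [0..<n]) [0..<m])"

definition coupling :: "nat \<Rightarrow> nat \<Rightarrow> (nat \<Rightarrow> real) \<Rightarrow> (nat \<Rightarrow> real)
    \<Rightarrow> (nat \<Rightarrow> nat \<Rightarrow> real) \<Rightarrow> bool" where
  "coupling m n p q P \<longleftrightarrow>
     (\<forall>i<m. \<forall>j<n. 0 \<le> P i j) \<and>
     (\<forall>i<m. (\<Sum>j<n. P i j) = p i) \<and>
     (\<forall>j<n. (\<Sum>i<m. P i j) = q j)"

definition prob_vec :: "nat \<Rightarrow> (nat \<Rightarrow> real) \<Rightarrow> bool" where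
  "prob_vec k p \<longleftrightarrow> (\<forall>i<k. 0 \<le> p i) \<and> (\<Sum>i<k. p i) = 1"

definition strict_schur_concave_on :: "real list set \<Rightarrow> (real list \<Rightarrow> real) \<Rightarrow> bool" where
  "strict_schur_concave_on S \<Psi> \<longleftrightarrow>
     (\<forall>x\<in>S. \<forall>y\<in>S. mset x = mset y \<longrightarrow> \<Psi> x = \<Psi> y) \<and>
     (\<forall>x\<in>S. \<forall>y\<in>S. majorized x y \<longrightarrow> \<Psi> x \<ge> \<Psi> y) \<and>
     (\<forall>x\<in>S. \<forall>y\<in>S. strictly_majorized x y \<longrightarrow> \<Psi> x > \<Psi> y)"

definition coupling_set :: "nat \<Rightarrow> nat \<Rightarrow> (nat \<Rightarrow> real) \<Rightarrow> (nat \<Rightarrow> real) \<Rightarrow> real list set" where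
  "coupling_set m n p q = flatten m n ` {P. coupling m n p q P}"

end

theory Submission
  imports Defs "HOL-Combinatorics.Permutations"
begin

lemma dec_len[simp]: "length (dec_rearr x) = length x"
  by (simp add: dec_rearr_def)

lemma dec_mset: "mset (dec_rearr x) = mset x"
  by (simp add: dec_rearr_def)

lemma dec_mono: "a \<le> b \<Longrightarrow> b < length x \<Longrightarrow> dec_rearr x ! b \<le> dec_rearr x ! a"
  unfolding dec_rearr_def
  by (simp add: rev_nth sorted_nth_mono)

lemma sum_take: "k \<le> length d \<Longrightarrow> sum_list (take k d) = (\<Sum>l<k. d ! l)"
  by (simp add: sum_list_sum_nth atLeast0LessThan)

lemma psum_full: "psum_dec x (length x) = sum_list x"
proof -
  have "sum_list (dec_rearr x) = sum_list x"
    by (metis dec_mset sum_mset_sum_list)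
  then show ?thesis by (simp add: psum_dec_def)
qed

lemma psum_exists:
  assumes "k \<le> length x"
  shows "\<exists>S. S \<subseteq> {..<length x} \<and> card S = k \<and> psum_dec x k = (\<Sum>l\<in>S. x ! l)"
proof -
  obtain p where p: "p permutes {..<length x}" "permute_list p x = dec_rearr x"
    by (metis dec_mset mset_eq_permutation)
  have dn: "\<And>l. l < length x \<Longrightarrow> dec_rearr x ! l = x ! p l"
    using p by (metis permute_list_nth)
  have inj: "inj_on p {..<k}" using p(1) by (meson injD inj_onI permutes_inj)
  have sub: "p ` {..<k} \<subseteq> {..<length x}"
  proof
    fix y assume "y \<in> p ` {..<k}"
    then obtain z where "z < k" "y = p z" by auto
    then show "y \<in> {..<length x}" using permutes_in_image[OF p(1), of z] assms by auto
  qed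
  have "psum_dec x k = (\<Sum>l<k. dec_rearr x ! l)"
    using assms by (simp add: psum_dec_def sum_take)
  also have "\<dots> = (\<Sum>l<k. x ! p l)" using assms dn by (intro sum.cong) auto
  also have "\<dots> = (\<Sum>l\<in>p ` {..<k}. x ! l)" using inj by (simp add: sum.reindex)
  moreover have "card (p ` {..<k}) = k" using card_image[OF inj] by simp
  ultimately show ?thesis using sub by (intro exI[of _ "p ` {..<k}"]) auto
qed

lemma desc_bound:
  fixes d :: "real list"
  assumes desc: "\<And>a b. a \<le> b \<Longrightarrow> b < length d \<Longrightarrow> d ! b \<le> d ! a"
    and T: "T \<subseteq> {..<length d}" "card T = k"
  shows "(\<Sum>l\<in>T. d ! l) \<le> (\<Sum>l<k. d ! l)"
proof (cases "k = 0")
  case True then show ?thesis using T by (simp add: finite_subset)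
next
  case False
  have fT: "finite T" using T finite_subset by blast
  have kle: "k \<le> length d" using T by (metis card_lessThan card_mono finite_lessThan)
  define \<tau> where "\<tau> = d ! (k - 1)"
  have c: "card (T - {..<k}) = card ({..<k} - T)"
  proof -
    have "card (T - {..<k}) = card T - card (T \<inter> {..<k})"
      using fT by (metis card_Diff_subset_Int finite_Int Diff_Int2 inf.idem card_Diff_subset inf_le1)
    moreover have "card ({..<k} - T) = card {..<k} - card ({..<k} \<inter> T)"
      by (metis card_Diff_subset_Int finite_Int finite_lessThan)
    ultimately show ?thesis using T by (simp add: Int_commute)
  qed
  have b1: "\<forall>l\<in>T - {..<k}. d ! l \<le> \<tau>"
  proof
    fix l assume l: "l \<in> T - {..<k}"
    then have "k - 1 \<le> l" "l < length d" using T by auto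
    then show "d ! l \<le> \<tau>" unfolding \<tau>_def by (rule desc)
  qed
  have b2: "\<forall>l\<in>{..<k} - T. \<tau> \<le> d ! l"
  proof
    fix l assume l: "l \<in> {..<k} - T"
    then have "l \<le> k - 1" "k - 1 < length d" using kle False by auto
    then show "\<tau> \<le> d ! l" unfolding \<tau>_def by (rule desc)
  qed
  have s1: "(\<Sum>l\<in>T - {..<k}. d ! l) \<le> of_nat (card (T - {..<k})) * \<tau>"
    using sum_bounded_above[of "T - {..<k}" "\<lambda>l. d ! l" \<tau>] b1 by simp
  have s2: "of_nat (card ({..<k} - T)) * \<tau> \<le> (\<Sum>l\<in>{..<k} - T. d ! l)"
    using sum_bounded_below[of "{..<k} - T" \<tau> "\<lambda>l. d ! l"] b2 by simp
  have e1: "(\<Sum>l\<in>T. d ! l) = (\<Sum>l\<in>T \<inter> {..<k}. d ! l) + (\<Sum>l\<in>T - {..<k}. d ! l)"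
    using sum.Int_Diff[OF fT, of "\<lambda>l. d ! l" "{..<k}"] .
  have e2: "(\<Sum>l<k. d ! l) = (\<Sum>l\<in>{..<k} \<inter> T. d ! l) + (\<Sum>l\<in>{..<k} - T. d ! l)"
    using sum.Int_Diff[OF finite_lessThan, of "\<lambda>l. d ! l" k T] .
  have "{..<k} \<inter> T = T \<inter> {..<k}" by blast
  with e1 e2 have dd: "(\<Sum>l\<in>T. d ! l) - (\<Sum>l<k. d ! l) = (\<Sum>l\<in>T - {..<k}. d ! l) - (\<Sum>l\<in>{..<k} - T. d ! l)" by simp
  then show ?thesis using s1 s2 c by (simp add: c)
qed

lemma psum_upper:
  assumes "S \<subseteq> {..<length x}" "card S = k"
  shows "(\<Sum>l\<in>S. x ! l) \<le> psum_dec x k"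
proof -
  obtain p where p: "p permutes {..<length x}" "permute_list p x = dec_rearr x"
    by (metis dec_mset mset_eq_permutation)
  have dn: "\<And>l. l < length x \<Longrightarrow> dec_rearr x ! l = x ! p l"
    using p by (metis permute_list_nth)
  define T where "T = inv p ` S"
  have pT: "p ` T = S" unfolding T_def using p(1)
    by (simp add: image_comp permutes_surj permutes_inv_o(1) image_inv_f_f permutes_inj)
  have inj: "inj_on p T" using p(1) by (meson inj_on_subset permutes_inj subset_UNIV)
  have Tsub: "T \<subseteq> {..<length x}" unfolding T_def using assms(1) p(1)
    by (metis image_mono permutes_image permutes_inv)
  have cT: "card T = k" using pT inj assms(2) card_image by fastforce
  have kle: "k \<le> length x" using Tsub cT by (metis card_lessThan card_mono finite_lessThan)
  have "(\<Sum>l\<in>p ` T. x ! l) = (\<Sum>l\<in>T. x ! p l)" using sum.reindex[OF inj, of "\<lambda>l. x ! l"] by simp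
  then have "(\<Sum>l\<in>S. x ! l) = (\<Sum>l\<in>T. x ! p l)" using pT by simp
  also have "\<dots> = (\<Sum>l\<in>T. dec_rearr x ! l)" using Tsub dn by (intro sum.cong) auto
  also have "\<dots> \<le> (\<Sum>l<k. dec_rearr x ! l)"
    by (rule desc_bound) (use dec_mono Tsub cT in auto)
  also have "\<dots> = psum_dec x k" using kle by (simp add: psum_dec_def sum_take)
  finally show ?thesis .
qed

lemma sum_two:
  assumes "finite A" "i \<noteq> j"
  shows "(\<Sum>l\<in>A. g l) = (\<Sum>l\<in>A - {i,j}. g l) + (if i \<in> A then g i else 0) + (if j \<in> A then g j else 0)"
proof -
  have "(\<Sum>l\<in>A. g l) = (\<Sum>l\<in>A - (A \<inter> {i,j}). g l) + (\<Sum>l\<in>A \<inter> {i,j}. g l)"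
    using assms(1) by (metis add.commute inf_le1 sum.subset_diff)
  moreover have "A - (A \<inter> {i,j}) = A - {i,j}" by auto
  moreover have "(\<Sum>l\<in>A \<inter> {i,j}. g l) = (if i \<in> A then g i else 0) + (if j \<in> A then g j else 0)"
    using assms(2) by (cases "i \<in> A"; cases "j \<in> A") (auto simp: Int_insert_right)
  ultimately show ?thesis by (metis add.assoc)
qed

lemma pair_maj:
  assumes len: "length y = length x" and ij: "i < length x" "j < length x" "i \<noteq> j"
    and oth: "\<forall>l<length x. l \<noteq> i \<longrightarrow> l \<noteq> j \<longrightarrow> y ! l = x ! l"
    and s: "y ! i + y ! j = x ! i + x ! j" and mx: "max (x ! i) (x ! j) \<le> max (y ! i) (y ! j)"
  shows "majorized x y"
proof -
  let ?N = "length x"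
  have key: "psum_dec x k \<le> psum_dec y k" if k: "k \<le> ?N" for k
  proof -
    obtain S where S: "S \<subseteq> {..<?N}" "card S = k" "psum_dec x k = (\<Sum>l\<in>S. x ! l)"
      using psum_exists[OF k] by blast
    have fS: "finite S" using S(1) finite_subset by blast
    define R where "R = S - {i,j}"
    have fR: "finite R" using fS R_def by simp
    have RR: "(\<Sum>l\<in>R. y ! l) = (\<Sum>l\<in>R. x ! l)"
      using S(1) oth unfolding R_def by (intro sum.cong) auto
    have ex: "(\<Sum>l\<in>S. x ! l) = (\<Sum>l\<in>R. x ! l) + (if i \<in> S then x ! i else 0) + (if j \<in> S then x ! j else 0)"
      unfolding R_def by (rule sum_two[OF fS ij(3)])
    have ey: "(\<Sum>l\<in>S. y ! l) = (\<Sum>l\<in>R. y ! l) + (if i \<in> S then y ! i else 0) + (if j \<in> S then y ! j else 0)"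
      unfolding R_def by (rule sum_two[OF fS ij(3)])
    show ?thesis
    proof (cases "(i \<in> S) = (j \<in> S)")
      case True
      then have "(\<Sum>l\<in>S. y ! l) = (\<Sum>l\<in>S. x ! l)" using ex ey RR s by auto
      then show ?thesis using S psum_upper[of S y k] len by simp
    next
      case False
      define mm where "mm = (if y ! j \<le> y ! i then i else j)"
      have mmR: "mm \<notin> R" unfolding mm_def R_def by auto
      have cS: "card S = Suc (card R)"
      proof -
        obtain e where "e \<in> {i,j}" "S = insert e R" "e \<notin> R"
          using False unfolding R_def by (cases "i \<in> S") auto
        then show ?thesis using fR by simp
      qed
      have sub': "insert mm R \<subseteq> {..<length y}" using S(1) ij len unfolding R_def mm_def by auto
      have card': "card (insert mm R) = k" using cS S(2) mmR fR by simp
      have "(\<Sum>l\<in>S. x ! l) \<le> (\<Sum>l\<in>R. x ! l) + y ! mm"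
        
      proof -
        have ym: "y ! mm = max (y ! i) (y ! j)" unfolding mm_def by auto
        have "(if i \<in> S then x ! i else 0) + (if j \<in> S then x ! j else 0) \<le> max (x ! i) (x ! j)"
          using False by auto
        then show ?thesis using ex ym mx by linarith
      qed
      also have "\<dots> = (\<Sum>l\<in>insert mm R. y ! l)" using RR mmR fR by simp
      also have "\<dots> \<le> psum_dec y k" by (rule psum_upper[OF sub' card'])
      finally show ?thesis using S(3) by simp
    qed
  qed
  have tot: "sum_list y = sum_list x"
  proof -
    have "sum_list y = (\<Sum>l<?N. y ! l)" using len by (simp add: sum_list_sum_nth atLeast0LessThan)
    also have "\<dots> = (\<Sum>l\<in>{..<?N} - {i,j}. y ! l) + y ! i + y ! j"
      using sum_two[of "{..<?N}" i j "\<lambda>l. y ! l"] ij by simp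
    also have "(\<Sum>l\<in>{..<?N} - {i,j}. y ! l) = (\<Sum>l\<in>{..<?N} - {i,j}. x ! l)"
      using oth by (intro sum.cong) auto
    also have "(\<Sum>l\<in>{..<?N} - {i,j}. x ! l) + y ! i + y ! j = (\<Sum>l\<in>{..<?N} - {i,j}. x ! l) + x ! i + x ! j"
      using s by simp
    also have "\<dots> = (\<Sum>l<?N. x ! l)"
      using sum_two[of "{..<?N}" i j "\<lambda>l. x ! l"] ij by simp
    also have "\<dots> = sum_list x" by (simp add: sum_list_sum_nth atLeast0LessThan)
    finally show ?thesis .
  qed
  have A: "\<forall>k. 1 \<le> k \<and> k < length x \<longrightarrow> psum_dec x k \<le> psum_dec y k"
    using key by simp
  have B: "psum_dec x (length x) = psum_dec y (length y)"
    using tot psum_full[of x] psum_full[of y] by simp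
  show ?thesis unfolding majorized_def using A B len by simp
qed

lemma maj_trans: "majorized x y \<Longrightarrow> majorized y z \<Longrightarrow> majorized x z"
  unfolding majorized_def by (metis order_trans)

definition sq :: "real list \<Rightarrow> real" where "sq x = sum_list (map (\<lambda>v. v^2) x)"

lemma sq_nth: "sq x = (\<Sum>l<length x. (x ! l)^2)"
  unfolding sq_def by (simp add: sum_list_sum_nth atLeast0LessThan)

lemma sq_mset: "mset x = mset y \<Longrightarrow> sq x = sq y"
  unfolding sq_def by (metis mset_map sum_mset_sum_list)

lemma strict_from_sq:
  assumes "majorized x y" "sq x < sq y"
  shows "strictly_majorized x y"
proof (rule ccontr)
  assume "\<not> ?thesis"
  then have eqs: "\<forall>k. 1 \<le> k \<and> k < length x \<longrightarrow> psum_dec x k = psum_dec y k"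
    using assms(1) unfolding strictly_majorized_def majorized_def by force
  have len: "length y = length x" using assms(1) unfolding majorized_def by simp
  have all: "psum_dec x k = psum_dec y k" if "k \<le> length x" for k
  proof -
    have "k = 0 \<or> (1 \<le> k \<and> k < length x) \<or> k = length x" using that by linarith
    then show ?thesis
      by (elim disjE) (use eqs assms(1) len in \<open>auto simp: psum_dec_def majorized_def\<close>)
  qed
  have "dec_rearr x = dec_rearr y"
  proof (rule nth_equalityI)
    show "length (dec_rearr x) = length (dec_rearr y)" using len by simp
    fix l assume l: "l < length (dec_rearr x)"
    have "psum_dec x (Suc l) = psum_dec x l + dec_rearr x ! l"
      using l by (simp add: psum_dec_def take_Suc_conv_app_nth)
    moreover have "psum_dec y (Suc l) = psum_dec y l + dec_rearr y ! l"
      using l len by (simp add: psum_dec_def take_Suc_conv_app_nth)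
    ultimately show "dec_rearr x ! l = dec_rearr y ! l" using all[of l] all[of "Suc l"] l by simp
  qed
  then have ms: "mset x = mset y" by (metis dec_mset)
  have "sq x = sq y" by (rule sq_mset[OF ms])
  then show False using assms(2) by simp
qed

lemma strict_trans:
  "majorized x y \<Longrightarrow> majorized y z \<Longrightarrow> sq x < sq y \<Longrightarrow> sq y \<le> sq z \<Longrightarrow> strictly_majorized x z"
  using maj_trans[of x y z] strict_from_sq[of x z] by simp

lemma pair_sq:
  assumes len: "length y = length x" and ij: "i < length x" "j < length x" "i \<noteq> j"
    and oth: "\<forall>l<length x. l \<noteq> i \<longrightarrow> l \<noteq> j \<longrightarrow> y ! l = x ! l"
  shows "sq y - sq x = (y ! i)^2 + (y ! j)^2 - (x ! i)^2 - (x ! j)^2"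
proof -
  let ?N = "length x"
  have "sq y = (\<Sum>l\<in>{..<?N} - {i,j}. (y ! l)^2) + (y ! i)^2 + (y ! j)^2"
    using sq_nth[of y] sum_two[of "{..<?N}" i j "\<lambda>l. (y ! l)^2"] ij len by simp
  moreover have "sq x = (\<Sum>l\<in>{..<?N} - {i,j}. (x ! l)^2) + (x ! i)^2 + (x ! j)^2"
    using sq_nth[of x] sum_two[of "{..<?N}" i j "\<lambda>l. (x ! l)^2"] ij by simp
  moreover have "(\<Sum>l\<in>{..<?N} - {i,j}. (y ! l)^2) = (\<Sum>l\<in>{..<?N} - {i,j}. (x ! l)^2)"
    using oth by (intro sum.cong) auto
  ultimately show ?thesis by simp
qed

lemma quad:
  fixes x y :: "real list"
  assumes len: "length y = length x"
    and pos: "\<alpha> < length x" "\<beta> < length x" "\<gamma> < length x" "\<delta> < length x"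
    and dist: "\<alpha> \<noteq> \<beta>" "\<alpha> \<noteq> \<gamma>" "\<alpha> \<noteq> \<delta>" "\<beta> \<noteq> \<gamma>" "\<beta> \<noteq> \<delta>" "\<gamma> \<noteq> \<delta>"
    and ya: "y ! \<alpha> = x ! \<alpha> + b" and yb: "y ! \<beta> = x ! \<beta> - b"
    and yc: "y ! \<gamma> = x ! \<gamma> + b" and yd: "y ! \<delta> = x ! \<delta> - b"
    and oth: "\<forall>l<length x. l \<noteq> \<alpha> \<longrightarrow> l \<noteq> \<beta> \<longrightarrow> l \<noteq> \<gamma> \<longrightarrow> l \<noteq> \<delta> \<longrightarrow> y ! l = x ! l"
    and h: "x ! \<beta> \<le> x ! \<alpha>" "0 \<le> x ! \<gamma>" "b = x ! \<delta>" "0 \<le> b"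
  shows "majorized x y \<and> (0 < b \<longrightarrow> strictly_majorized x y)"
proof -
  define z where "z = map (\<lambda>l. if l = \<alpha> then x ! \<alpha> + b else if l = \<beta> then x ! \<beta> - b else x ! l) [0..<length x]"
  have lz: "length z = length x" unfolding z_def by simp
  have zn: "z ! l = (if l = \<alpha> then x ! \<alpha> + b else if l = \<beta> then x ! \<beta> - b else x ! l)" if "l < length x" for l
    unfolding z_def using that by simp
  have za: "z ! \<alpha> = x ! \<alpha> + b" using zn pos by simp
  have zb: "z ! \<beta> = x ! \<beta> - b" using zn pos dist by simp
  have zc: "z ! \<gamma> = x ! \<gamma>" using zn pos dist by simp
  have zd: "z ! \<delta> = x ! \<delta>" using zn pos dist by simp
  have oth1: "\<forall>l<length x. l \<noteq> \<alpha> \<longrightarrow> l \<noteq> \<beta> \<longrightarrow> z ! l = x ! l" using zn by simp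
  have oth2: "\<forall>l<length z. l \<noteq> \<gamma> \<longrightarrow> l \<noteq> \<delta> \<longrightarrow> y ! l = z ! l"
  proof (intro allI impI)
    fix l assume l: "l < length z" "l \<noteq> \<gamma>" "l \<noteq> \<delta>"
    show "y ! l = z ! l"
    proof (cases "l = \<alpha> \<or> l = \<beta>")
      case True then show ?thesis using ya yb za zb by auto
    next
      case False then show ?thesis using oth zn l lz by auto
    qed
  qed
  have m1: "majorized x z"
    by (rule pair_maj[OF lz pos(1) pos(2) dist(1) oth1]) (use za zb h in auto)
  have m2: "majorized z y"
    by (rule pair_maj[of y z \<gamma> \<delta>]) (use len lz pos dist oth2 zc zd yc yd h in auto)
  have q1: "sq z - sq x = (x ! \<alpha> + b)^2 + (x ! \<beta> - b)^2 - (x ! \<alpha>)^2 - (x ! \<beta>)^2"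
    using pair_sq[OF lz pos(1) pos(2) dist(1) oth1] za zb by simp
  have q2: "sq y - sq z = (x ! \<gamma> + b)^2 + (x ! \<delta> - b)^2 - (x ! \<gamma>)^2 - (x ! \<delta>)^2"
    using pair_sq[of y z \<gamma> \<delta>] len lz pos dist oth2 zc zd yc yd by simp
  have e1: "(x ! \<alpha> + b)^2 + (x ! \<beta> - b)^2 - (x ! \<alpha>)^2 - (x ! \<beta>)^2 = 2 * b * (x ! \<alpha> - x ! \<beta>) + 2 * (b * b)"
    by (simp add: power2_eq_square algebra_simps)
  have e2: "(x ! \<gamma> + b)^2 + (x ! \<delta> - b)^2 - (x ! \<gamma>)^2 - (x ! \<delta>)^2 = 2 * (x ! \<gamma> * b)"
    using h(3) by (simp add: power2_eq_square algebra_simps)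
  have "0 \<le> x ! \<gamma> * b" using h by simp
  then have s2: "sq z \<le> sq y" using q2 e2 by simp
  have s1: "sq x < sq z" if "0 < b"
  proof -
    have "0 \<le> b * (x ! \<alpha> - x ! \<beta>)" using h that by simp
    moreover have "0 < b * b" using that by simp
    ultimately show ?thesis using q1 e1 by simp
  qed
  show ?thesis using maj_trans[OF m1 m2] strict_trans[OF m1 m2 _ s2] s1 by blast
qed

lemma flatten_map: "flatten m n P = map (\<lambda>l. P (l div n) (l mod n)) [0..<m*n]"
proof (induction m)
  case 0 then show ?case by (simp add: flatten_def)
next
  case (Suc m)
  have "flatten (Suc m) n P = flatten m n P @ map (P m) [0..<n]" by (simp add: flatten_def)
  moreover have "[0..<Suc m * n] = [0..<m*n] @ [m*n..<n + m*n]"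
    using upt_add_eq_append[of 0 "m*n" n] by (simp add: add.commute)
  moreover have "[m*n..<n + m*n] = map (\<lambda>i. i + m*n) [0..<n]" by (simp add: map_add_upt)
  moreover have "map (\<lambda>l. P (l div n) (l mod n)) (map (\<lambda>i. i + m*n) [0..<n]) = map (P m) [0..<n]"
    unfolding map_map by (rule map_cong) (auto simp: comp_def)
  ultimately show ?case using Suc by simp
qed

lemma flatten_len: "length (flatten m n P) = m * n"
  by (simp add: flatten_map)

lemma flatten_nth: "l < m * n \<Longrightarrow> flatten m n P ! l = P (l div n) (l mod n)"
  by (simp add: flatten_map)

lemma idx_props:
  assumes "i < m" "j < (n::nat)"
  shows "i * n + j < m * n" "(i * n + j) div n = i" "(i * n + j) mod n = j"
proof -
  have "i * n + j < i * n + n" using assms by simp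
  also have "\<dots> = Suc i * n" by simp
  also have "\<dots> \<le> m * n" using assms(1) by (intro mult_le_mono1) simp
  finally show "i * n + j < m * n" .
  show "(i * n + j) div n = i" "(i * n + j) mod n = j" using assms by simp_all
qed

lemma sum_change2:
  fixes f g :: "nat \<Rightarrow> real"
  assumes "finite A" "i \<noteq> j" "i \<in> A" "j \<in> A"
    and "\<forall>l\<in>A - {i,j}. g l = f l" "g i + g j = f i + f j"
  shows "sum g A = sum f A"
proof -
  have "sum g A = sum g (A - {i,j}) + g i + g j" using sum_two[OF assms(1,2), of g] assms(3,4) by simp
  moreover have "sum f A = sum f (A - {i,j}) + f i + f j" using sum_two[OF assms(1,2), of f] assms(3,4) by simp
  moreover have "sum g (A - {i,j}) = sum f (A - {i,j})" using assms(5) by (intro sum.cong) auto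
  ultimately show ?thesis using assms(6) by simp
qed

theorem lemma4p1:
  fixes m n :: nat and p q :: "nat \<Rightarrow> real" and \<Psi> :: "real list \<Rightarrow> real"
    and P :: "nat \<Rightarrow> nat \<Rightarrow> real" and i1 i2 j1 j2 :: nat
  assumes "m \<ge> 2" and "n \<ge> 2"
    and "prob_vec m p" and "prob_vec n q"
    and "\<forall>i<m. p i > 0" and "\<forall>j<n. q j > 0"
    and "strict_schur_concave_on (coupling_set m n p q) \<Psi>"
    and "coupling m n p q P"
    and "i1 < m" and "i2 < m" and "i1 \<noteq> i2"
    and "j1 < n" and "j2 < n" and "j1 \<noteq> j2"
    and "max (P i1 j1) (P i2 j2) \<ge> max (P i1 j2) (P i2 j1)"
  defines "b \<equiv> min (P i1 j2) (P i2 j1)"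
  defines "P' \<equiv> (\<lambda>i j. if i = i1 \<and> j = j1 then P i1 j1 + b
                    else if i = i2 \<and> j = j2 then P i2 j2 + b
                    else if i = i1 \<and> j = j2 then P i1 j2 - b
                    else if i = i2 \<and> j = j1 then P i2 j1 - b
                    else P i j)"
  shows "coupling m n p q P' \<and>
         majorized (flatten m n P) (flatten m n P') \<and>
         \<Psi> (flatten m n P') \<le> \<Psi> (flatten m n P) \<and>
         (b > 0 \<longrightarrow> strictly_majorized (flatten m n P) (flatten m n P') \<and>
                    \<Psi> (flatten m n P') < \<Psi> (flatten m n P))"
proof -
  note assms
  have P0: "\<forall>i<m. \<forall>j<n. 0 \<le> P i j" and Prow: "\<forall>i<m. (\<Sum>j<n. P i j) = p i"
    and Pcol: "\<forall>j<n. (\<Sum>i<m. P i j) = q j"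
    using assms(8) unfolding coupling_def by auto
  define a where "a = P i1 j1"
  define d where "d = P i2 j2"
  define c1 where "c1 = P i1 j2"
  define c2 where "c2 = P i2 j1"
  have a0: "0 \<le> a" "0 \<le> d" "0 \<le> c1" "0 \<le> c2"
    using P0 assms(9,10,12,13) unfolding a_def d_def c1_def c2_def by auto
  have bdef: "b = min c1 c2" unfolding b_def c1_def c2_def by simp
  have b0: "0 \<le> b" using a0 bdef by simp
  have mx: "max c1 c2 \<le> max a d" using assms(15) unfolding a_def d_def c1_def c2_def by simp
  have P'11: "P' i1 j1 = a + b" unfolding P'_def a_def by simp
  have P'22: "P' i2 j2 = d + b" unfolding P'_def d_def using assms(11,14) by simp
  have P'12: "P' i1 j2 = c1 - b" unfolding P'_def c1_def using assms(11,14) by simp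
  have P'21: "P' i2 j1 = c2 - b" unfolding P'_def c2_def using assms(11,14) by simp
  have P'oth: "P' i j = P i j" if "\<not> ((i = i1 \<or> i = i2) \<and> (j = j1 \<or> j = j2))" for i j
    unfolding P'_def using that by auto
  have cP': "coupling m n p q P'"
    unfolding coupling_def
  proof (intro conjI allI impI)
    fix i j assume "i < m" "j < n"
    then show "0 \<le> P' i j"
      using P0 a0 bdef P'11 P'22 P'12 P'21 P'oth[of i j] by (cases "(i = i1 \<or> i = i2) \<and> (j = j1 \<or> j = j2)") auto
  next
    fix i assume i: "i < m"
    have "(\<Sum>j<n. P' i j) = (\<Sum>j<n. P i j)"
    proof (cases "i = i1 \<or> i = i2")
      case True
      show ?thesis
        by (rule sum_change2[of "{..<n}" j1 j2]) (use True assms(11,12,13,14) P'11 P'22 P'12 P'21 P'oth a_def d_def c1_def c2_def in auto)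
    next
      case False then show ?thesis using P'oth by simp
    qed
    then show "(\<Sum>j<n. P' i j) = p i" using Prow i by simp
  next
    fix j assume j: "j < n"
    have "(\<Sum>i<m. P' i j) = (\<Sum>i<m. P i j)"
    proof (cases "j = j1 \<or> j = j2")
      case True
      show ?thesis
        by (rule sum_change2[of "{..<m}" i1 i2]) (use True assms(9,10,11,14) P'11 P'22 P'12 P'21 P'oth a_def d_def c1_def c2_def in auto)
    next
      case False then show ?thesis using P'oth by simp
    qed
    then show "(\<Sum>i<m. P' i j) = q j" using Pcol j by simp
  qed
  define x where "x = flatten m n P"
  define y where "y = flatten m n P'"
  define A where "A = i1 * n + j1"
  define D where "D = i2 * n + j2"
  define C1 where "C1 = i1 * n + j2"
  define C2 where "C2 = i2 * n + j1"
  have lx: "length x = m * n" and ly: "length y = length x" unfolding x_def y_def by (simp_all add: flatten_len)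
  note I11 = idx_props[OF assms(9) assms(12)]
  note I22 = idx_props[OF assms(10) assms(13)]
  note I12 = idx_props[OF assms(9) assms(13)]
  note I21 = idx_props[OF assms(10) assms(12)]
  have pos: "A < length x" "D < length x" "C1 < length x" "C2 < length x"
    using I11 I22 I12 I21 lx unfolding A_def D_def C1_def C2_def by simp_all
  have dist: "A \<noteq> D" "A \<noteq> C1" "A \<noteq> C2" "D \<noteq> C1" "D \<noteq> C2" "C1 \<noteq> C2"
    using I11 I22 I12 I21 assms(11,14) unfolding A_def D_def C1_def C2_def by metis+
  have xv: "x ! A = a" "x ! D = d" "x ! C1 = c1" "x ! C2 = c2"
    using I11 I22 I12 I21 unfolding x_def A_def D_def C1_def C2_def a_def d_def c1_def c2_def
    by (simp_all add: flatten_nth)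
  have yv: "y ! A = a + b" "y ! D = d + b" "y ! C1 = c1 - b" "y ! C2 = c2 - b"
    using I11 I22 I12 I21 P'11 P'22 P'12 P'21 unfolding y_def A_def D_def C1_def C2_def
    by (simp_all add: flatten_nth)
  have oth: "\<forall>l<length x. l \<noteq> A \<longrightarrow> l \<noteq> D \<longrightarrow> l \<noteq> C1 \<longrightarrow> l \<noteq> C2 \<longrightarrow> y ! l = x ! l"
  proof (intro allI impI)
    fix l assume l: "l < length x" "l \<noteq> A" "l \<noteq> D" "l \<noteq> C1" "l \<noteq> C2"
    have lm: "l < m * n" using l lx by simp
    have ll: "l = (l div n) * n + l mod n" by simp
    have "\<not> ((l div n = i1 \<or> l div n = i2) \<and> (l mod n = j1 \<or> l mod n = j2))"
      using l(2-5) ll unfolding A_def D_def C1_def C2_def by metis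
    then show "y ! l = x ! l" unfolding x_def y_def using lm P'oth by (simp add: flatten_nth)
  qed
  have h: "max c1 c2 \<le> max a d" "0 \<le> a" "0 \<le> d" "0 \<le> c1" "0 \<le> c2" "b = min c1 c2" using mx a0 bdef by auto
  have res: "majorized x y \<and> (0 < b \<longrightarrow> strictly_majorized x y)"
  proof (cases "d \<le> a")
    case True
    show ?thesis
    proof (cases "c2 \<le> c1")
      case True
      have hh: "c1 \<le> a" "b = c2" using h \<open>d \<le> a\<close> True by (auto simp: max_def min_def split: if_splits)
      show ?thesis
        proof (rule quad[of y x A C1 D C2 b])
        show "\<forall>l<length x. l \<noteq> A \<longrightarrow> l \<noteq> C1 \<longrightarrow> l \<noteq> D \<longrightarrow> l \<noteq> C2 \<longrightarrow> y ! l = x ! l"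
          using oth by blast
        qed (simp_all only: hh a0 ly pos dist dist[THEN not_sym] xv yv not_False_eq_True)
    next
      case False
      have hh: "c2 \<le> a" "b = c1" using h \<open>d \<le> a\<close> False by (auto simp: max_def min_def split: if_splits)
      show ?thesis
        proof (rule quad[of y x A C2 D C1 b])
        show "\<forall>l<length x. l \<noteq> A \<longrightarrow> l \<noteq> C2 \<longrightarrow> l \<noteq> D \<longrightarrow> l \<noteq> C1 \<longrightarrow> y ! l = x ! l"
          using oth by blast
        qed (simp_all only: hh a0 ly pos dist dist[THEN not_sym] xv yv not_False_eq_True)
    qed
  next
    case False
    show ?thesis
    proof (cases "c2 \<le> c1")
      case True
      have hh: "c1 \<le> d" "b = c2" using h \<open>\<not> d \<le> a\<close> True by (auto simp: max_def min_def split: if_splits)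
      show ?thesis
        proof (rule quad[of y x D C1 A C2 b])
        show "\<forall>l<length x. l \<noteq> D \<longrightarrow> l \<noteq> C1 \<longrightarrow> l \<noteq> A \<longrightarrow> l \<noteq> C2 \<longrightarrow> y ! l = x ! l"
          using oth by blast
        qed (simp_all only: hh a0 ly pos dist dist[THEN not_sym] xv yv not_False_eq_True)
    next
      case False
      have hh: "c2 \<le> d" "b = c1" using h \<open>\<not> d \<le> a\<close> False by (auto simp: max_def min_def split: if_splits)
      show ?thesis
        proof (rule quad[of y x D C2 A C1 b])
        show "\<forall>l<length x. l \<noteq> D \<longrightarrow> l \<noteq> C2 \<longrightarrow> l \<noteq> A \<longrightarrow> l \<noteq> C1 \<longrightarrow> y ! l = x ! l"
          using oth by blast
        qed (simp_all only: hh a0 ly pos dist dist[THEN not_sym] xv yv not_False_eq_True)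
    qed
  qed
  have xin: "x \<in> coupling_set m n p q" unfolding x_def coupling_set_def using assms(8) by blast
  have yin: "y \<in> coupling_set m n p q" unfolding y_def coupling_set_def using cP' by blast
  have sc1: "\<Psi> y \<le> \<Psi> x" using assms(7) xin yin res unfolding strict_schur_concave_on_def by blast
  have sc2: "0 < b \<longrightarrow> \<Psi> y < \<Psi> x" using assms(7) xin yin res unfolding strict_schur_concave_on_def by blast
  show ?thesis using cP' res sc1 sc2 unfolding x_def y_def by blast
qed

end
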